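(* Let $\Sigma$ be a simplicial complex which is oriented with respect to a partial order $\le$ on its vertex set $\Sigma^0$, let $Y$ be a topological space, and let $\Phi,\Psi:\Sigma^0\rightrightarrows Y$ be mappings (to nonempty subsets of $Y$) such that for every $v\in\Sigma^0$, $\Phi(v)\subset\Psi(v)$ and $\Phi(v)$ is contractible in $\Psi(v)$, and such that $\Psi(v)\subset\Phi(u)$ whenever $u,v\in\Sigma^0$ with $u<v$. Then there exists a continuous map $h:|\Sigma|\to Y$ such that $h(|\sigma|)\subset\Psi(\min\sigma)$ for every $\sigma\in\Sigma$.
   Context: A simplicial complex is a collection $\Sigma$ of nonempty finite subsets of a set such that $\tau\in\Sigma$ whenever $\emptyset\ne\tau\subset\sigma\in\Sigma$; its vertex set $\Sigma^0$ is $\bigcup\Sigma$. Its geometric realisation $|\Sigma|$ is obtained by embedding $\Sigma^0$ as a linearly independent subset of a linear space, letting $|\sigma|$ be the convex hull of $\sigma$ and $|\Sigma|=\bigcup_{\sigma\in\Sigma}|\sigma|$, with the Whitehead topology: $U\subset|\Sigma|$ is open iff $U\cap|\sigma|$ is open in $|\sigma|$ for every $\sigma\in\Sigma$. $\Sigma$ is oriented with respect to a partial order $\le$ on $\Sigma^0$ if each simplex is linearly ordered by $\le$; then $\min\sigma$ denotes the least vertex of $\sigma$. A subset $S\subset T$ is contractible in $T$ if there is a homotopy $H:S\times[0,1]\to T$ with $H(y,0)=y$ and $H(y,1)=p$ for all $y\in S$, for some point $p\in T$. *)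

theory Defs
  imports "HOL-Analysis.Analysis"
begin

definition abstract_simplicial_complex :: "'v set set \<Rightarrow> bool" where
  "abstract_simplicial_complex K \<longleftrightarrow>
     (\<forall>\<sigma>\<in>K. \<sigma> \<noteq> {} \<and> finite \<sigma>) \<and>
     (\<forall>\<sigma>\<in>K. \<forall>\<tau>. \<tau> \<noteq> {} \<and> \<tau> \<subseteq> \<sigma> \<longrightarrow> \<tau> \<in> K)"

definition vertices :: "'v set set \<Rightarrow> 'v set" where
  "vertices K = \<Union>K"

text \<open>Geometric simplex |sigma|: the vertices are embedded as the standard basis
  (indicator functions) of the real vector space 'v => real, which is linearly
  independent; |sigma| is their convex hull, i.e. the set of convex combinations
  of the vertices of the (finite) simplex sigma, written out in coordinates.\<close>
definition geom_simplex :: "'v set \<Rightarrow> ('v \<Rightarrow> real) set" where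
  "geom_simplex \<sigma> = {x. (\<forall>v. 0 \<le> x v) \<and> (\<forall>v. v \<notin> \<sigma> \<longrightarrow> x v = 0) \<and> sum x \<sigma> = 1}"

definition realisation :: "'v set set \<Rightarrow> ('v \<Rightarrow> real) set" where
  "realisation K = (\<Union>\<sigma>\<in>K. geom_simplex \<sigma>)"

definition whitehead_topology :: "'v set set \<Rightarrow> ('v \<Rightarrow> real) topology" where
  "whitehead_topology K = topology (\<lambda>U. U \<subseteq> realisation K \<and>
      (\<forall>\<sigma>\<in>K. openin (top_of_set (geom_simplex \<sigma>)) (U \<inter> geom_simplex \<sigma>)))"

definition oriented :: "'v set set \<Rightarrow> ('v \<times> 'v) set \<Rightarrow> bool" where
  "oriented K r \<longleftrightarrow> partial_order_on (vertices K) r \<and>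
     (\<forall>\<sigma>\<in>K. \<forall>u\<in>\<sigma>. \<forall>v\<in>\<sigma>. (u, v) \<in> r \<or> (v, u) \<in> r)"

definition min_vertex :: "('v \<times> 'v) set \<Rightarrow> 'v set \<Rightarrow> 'v" where
  "min_vertex r \<sigma> = (THE v. v \<in> \<sigma> \<and> (\<forall>w\<in>\<sigma>. (v, w) \<in> r))"

definition contractible_in :: "'b topology \<Rightarrow> 'b set \<Rightarrow> 'b set \<Rightarrow> bool" where
  "contractible_in Y S T \<longleftrightarrow>
     (\<exists>H p. p \<in> T \<and>
        continuous_map (prod_topology (subtopology Y S) (top_of_set {0..1::real})) (subtopology Y T) H \<and>
        (\<forall>y\<in>S. H (y, 0) = y \<and> H (y, 1) = p))"

end

theory Submission
  imports Defs
begin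


lemma chain_min_ex:
  assumes "finite S" "S \<noteq> {}" "\<forall>u\<in>S. \<forall>v\<in>S. (u,v)\<in>r \<or> (v,u)\<in>r" "trans r"
  shows "\<exists>v\<in>S. \<forall>w\<in>S. (v,w)\<in>r"
  using assms
proof (induction S rule: finite_ne_induct)
  case (singleton x) then show ?case by auto
next
  case (insert a F)
  then obtain v where v: "v\<in>F" "\<forall>w\<in>F. (v,w)\<in>r" by auto
  show ?case
  proof (cases "(v,a)\<in>r")
    case True then show ?thesis using v by auto
  next
    case False
    then have "(a,v)\<in>r" using insert.prems v by auto
    then have "\<forall>w\<in>F. (a,w)\<in>r" using v \<open>trans r\<close> by (meson transD)
    moreover have "(a,a)\<in>r" using insert.prems by auto
    ultimately show ?thesis by auto
  qed
qed

lemma min_vertex_eq: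
  assumes "antisym r" "u \<in> S" "\<forall>w\<in>S. (u,w)\<in>r"
  shows "min_vertex r S = u"
  unfolding min_vertex_def
  by (rule the_equality) (use assms in \<open>auto dest: antisymD\<close>)

lemma geom_simplex_compact:
  assumes "finite \<sigma>"
  shows "compact (geom_simplex \<sigma>)"
proof -
  define B where "B = (\<lambda>v::'a. if v \<in> \<sigma> then {0..1::real} else {0})"
  have "compactin (product_topology (\<lambda>_. euclidean) UNIV) (PiE UNIV B)"
    by (subst compactin_PiE) (auto simp: B_def)
  then have c: "compactin euclidean (PiE UNIV B)"
    by (simp add: euclidean_product_topology)
  have sub: "geom_simplex \<sigma> \<subseteq> PiE UNIV B"
  proof
    fix x assume x: "x \<in> geom_simplex \<sigma>"
    have "x v \<le> 1" if "v \<in> \<sigma>" for v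
    proof -
      have "x v \<le> sum x \<sigma>" using x that assms by (intro member_le_sum) (auto simp: geom_simplex_def)
      then show ?thesis using x by (simp add: geom_simplex_def)
    qed
    then show "x \<in> PiE UNIV B" using x by (auto simp: B_def geom_simplex_def PiE_def extensional_def)
  qed
  have eq: "geom_simplex \<sigma> = (\<Inter>v. {x. 0 \<le> x v}) \<inter> (\<Inter>v\<in>-\<sigma>. {x. x v = 0}) \<inter> {x. sum x \<sigma> = 1}"
    by (auto simp: geom_simplex_def)
  have cl: "closed (geom_simplex \<sigma>)"
    unfolding eq
    by (intro closed_Int closed_INT ballI closed_Collect_le closed_Collect_eq continuous_on_sum
          continuous_on_const continuous_on_product_coordinates)
  have "compactin euclidean (geom_simplex \<sigma>)"
    by (rule closed_compactin[OF c sub]) (use cl in auto)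
  then show ?thesis by simp
qed

lemma Hausdorff_fun: "Hausdorff_space (euclidean :: ('a \<Rightarrow> real) topology)"
  by (metis euclidean_product_topology Hausdorff_space_product_topology Hausdorff_space_euclidean)



definition ystep :: "('v\<times>'v) set \<Rightarrow> ('v\<Rightarrow>real) \<Rightarrow> ('v\<Rightarrow>real)" where
  "ystep r x = (\<lambda>w. if w = min_vertex r {v. x v \<noteq> 0} then 0
                    else x w / (1 - x (min_vertex r {v. x v \<noteq> 0})))"

primrec gg :: "('v\<times>'v) set \<Rightarrow> ('v \<Rightarrow> 'b \<times> real \<Rightarrow> 'b) \<Rightarrow> ('v \<Rightarrow> 'b) \<Rightarrow> nat \<Rightarrow> ('v\<Rightarrow>real) \<Rightarrow> 'b" where
  "gg r H P 0 x = P (min_vertex r {v. x v \<noteq> 0})"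
| "gg r H P (Suc n) x = (if x (min_vertex r {v. x v \<noteq> 0}) = 1 then P (min_vertex r {v. x v \<noteq> 0})
      else H (min_vertex r {v. x v \<noteq> 0}) (gg r H P n (ystep r x), x (min_vertex r {v. x v \<noteq> 0})))"

definition hh where "hh r H P x = gg r H P (card {v. x v \<noteq> 0}) x"

locale cplx =
  fixes K :: "'v set set" and r :: "('v \<times> 'v) set"
    and Y :: "'b topology" and \<Phi> \<Psi> :: "'v \<Rightarrow> 'b set"
    and H :: "'v \<Rightarrow> 'b \<times> real \<Rightarrow> 'b" and P :: "'v \<Rightarrow> 'b"
  assumes K: "abstract_simplicial_complex K"
    and or: "oriented K r"
    and PhiY: "\<And>v. v \<in> vertices K \<Longrightarrow> \<Phi> v \<noteq> {} \<and> \<Phi> v \<subseteq> topspace Y"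
    and PsiPhi: "\<And>u v. u \<in> vertices K \<Longrightarrow> v \<in> vertices K \<Longrightarrow> (u, v) \<in> r \<Longrightarrow> u \<noteq> v \<Longrightarrow> \<Psi> v \<subseteq> \<Phi> u"
    and Hc: "\<And>u. u \<in> vertices K \<Longrightarrow> continuous_map (prod_topology (subtopology Y (\<Phi> u)) (top_of_set {0..1::real})) (subtopology Y (\<Psi> u)) (H u)"
    and H0: "\<And>u y. u \<in> vertices K \<Longrightarrow> y \<in> \<Phi> u \<Longrightarrow> H u (y,0) = y"
    and H1: "\<And>u y. u \<in> vertices K \<Longrightarrow> y \<in> \<Phi> u \<Longrightarrow> H u (y,1) = P u"
    and PP: "\<And>u. u \<in> vertices K \<Longrightarrow> P u \<in> \<Psi> u \<and> P u \<in> topspace Y"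
begin

abbreviation "h \<equiv> hh r H P"

lemma simplex_basic:
  assumes "\<sigma> \<in> K"
  shows "finite \<sigma>" "\<sigma> \<noteq> {}" "\<sigma> \<subseteq> vertices K" "\<forall>u\<in>\<sigma>. \<forall>v\<in>\<sigma>. (u,v)\<in>r \<or> (v,u)\<in>r"
    "\<And>\<tau>. \<tau> \<noteq> {} \<Longrightarrow> \<tau> \<subseteq> \<sigma> \<Longrightarrow> \<tau> \<in> K"
proof -
  show "finite \<sigma>" "\<sigma> \<noteq> {}" using assms K unfolding abstract_simplicial_complex_def by blast+
  show "\<sigma> \<subseteq> vertices K" using assms unfolding vertices_def by blast
  show "\<forall>u\<in>\<sigma>. \<forall>v\<in>\<sigma>. (u,v)\<in>r \<or> (v,u)\<in>r" using assms or unfolding oriented_def by blast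
  show "\<And>\<tau>. \<tau> \<noteq> {} \<Longrightarrow> \<tau> \<subseteq> \<sigma> \<Longrightarrow> \<tau> \<in> K" using assms K unfolding abstract_simplicial_complex_def by blast
qed

lemma r_props: "trans r" "antisym r" "\<And>v. v \<in> vertices K \<Longrightarrow> (v,v) \<in> r"
proof -
  have "partial_order_on (vertices K) r" using or unfolding oriented_def by blast
  then show "trans r" "antisym r" "\<And>v. v \<in> vertices K \<Longrightarrow> (v,v) \<in> r"
    unfolding partial_order_on_def preorder_on_def refl_on_def by blast+
qed

lemma mv:
  assumes "\<sigma> \<in> K" "\<tau> \<subseteq> \<sigma>" "\<tau> \<noteq> {}"
  shows "min_vertex r \<tau> \<in> \<tau>" "\<forall>w\<in>\<tau>. (min_vertex r \<tau>, w) \<in> r"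
proof -
  have "finite \<tau>" using simplex_basic[OF assms(1)] assms(2) finite_subset by blast
  then obtain v where v: "v\<in>\<tau>" "\<forall>w\<in>\<tau>. (v,w)\<in>r"
    using chain_min_ex[of \<tau> r] simplex_basic[OF assms(1)] assms r_props by blast
  then have "min_vertex r \<tau> = v" by (rule min_vertex_eq[OF r_props(2)])
  then show "min_vertex r \<tau> \<in> \<tau>" "\<forall>w\<in>\<tau>. (min_vertex r \<tau>, w) \<in> r" using v by auto
qed

lemma delta_eq:
  assumes "finite \<sigma>" "x \<in> geom_simplex \<sigma>" "u \<in> \<sigma>" "x u = 1"
  shows "x = (\<lambda>w. if w = u then 1 else 0)"
proof
  fix w
  have "sum x \<sigma> = x u + sum x (\<sigma> - {u})" using assms by (simp add: sum.remove)
  then have "sum x (\<sigma> - {u}) = 0" using assms by (simp add: geom_simplex_def)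
  then have "\<forall>w\<in>\<sigma>-{u}. x w = 0" using assms
    by (subst sum_nonneg_eq_0_iff[symmetric]) (auto simp: geom_simplex_def)
  then show "x w = (if w = u then 1 else 0)" using assms by (auto simp: geom_simplex_def)
qed

lemma h_delta:
  assumes "u \<in> vertices K"
  shows "h (\<lambda>w. if w = u then 1 else 0) = P u"
proof -
  have s: "{v. (if v = u then 1 else 0::real) \<noteq> 0} = {u}" by auto
  have m: "min_vertex r {u} = u" using min_vertex_eq[of r u "{u}"] r_props assms by auto
  have c: "card {u} = Suc 0" by simp
  show ?thesis unfolding hh_def s c gg.simps m by simp
qed


lemma supp_sub: "x \<in> geom_simplex \<sigma> \<Longrightarrow> {v. x v \<noteq> 0} \<subseteq> \<sigma>"
  by (auto simp: geom_simplex_def)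

lemma coord_le1: "finite \<sigma> \<Longrightarrow> x \<in> geom_simplex \<sigma> \<Longrightarrow> u \<in> \<sigma> \<Longrightarrow> x u \<le> 1"
  using member_le_sum[of u \<sigma> x] by (auto simp: geom_simplex_def)

lemma q_step:
  assumes fin: "finite \<sigma>" and u: "u \<in> \<sigma>" "u \<in> vertices K" and \<tau>: "\<tau> = \<sigma> - {u}"
    and ule: "\<forall>w\<in>\<sigma>. (u,w)\<in>r"
    and hz: "h z \<in> \<Phi> u"
    and z: "z \<in> geom_simplex \<tau>" and s: "0 \<le> s" "s \<le> 1"
  defines "x \<equiv> (\<lambda>w. if w = u then s else (1 - s) * z w)"
  shows "x \<in> geom_simplex \<sigma>" "h x = H u (h z, s)"
proof -
  have zu: "z u = 0" using z \<tau> by (auto simp: geom_simplex_def)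
  have sz: "sum z \<tau> = 1" using z by (simp add: geom_simplex_def)
  have "sum x \<sigma> = x u + sum x \<tau>" using fin u \<tau> by (simp add: sum.remove)
  also have "sum x \<tau> = (1 - s) * sum z \<tau>" unfolding sum_distrib_left using \<tau>
    by (intro sum.cong) (auto simp: x_def)
  finally have "sum x \<sigma> = 1" using sz by (simp add: x_def)
  then show "x \<in> geom_simplex \<sigma>" using z s \<tau> u
    by (auto simp: geom_simplex_def x_def)
  show "h x = H u (h z, s)"
  proof (cases "s = 1")
    case True
    then have "x = (\<lambda>w. if w = u then 1 else 0)" by (auto simp: x_def)
    then show ?thesis using h_delta[OF u(2)] H1[OF u(2) hz] True by simp
  next
    case s1: False
    show ?thesis
    proof (cases "s = 0")
      case True
      then have "x = z" using zu by (auto simp: x_def)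
      then show ?thesis using H0[OF u(2) hz] True by simp
    next
      case False
      have suppz: "{v. z v \<noteq> 0} \<subseteq> \<tau>" using supp_sub[OF z] .
      have finz: "finite {v. z v \<noteq> 0}" using suppz fin \<tau> finite_subset by blast
      have sx: "{v. x v \<noteq> 0} = insert u {v. z v \<noteq> 0}" using False s1 s by (auto simp: x_def)
      have m: "min_vertex r {v. x v \<noteq> 0} = u"
        unfolding sx by (rule min_vertex_eq) (use r_props ule suppz \<tau> u in auto)
      have c: "card {v. x v \<noteq> 0} = Suc (card {v. z v \<noteq> 0})"
        unfolding sx using finz suppz \<tau> by (subst card_insert_disjoint) auto
      have ys: "ystep r x = z" unfolding ystep_def m using zu s1 s by (auto simp: x_def)
      have xu: "x u = s" by (simp add: x_def)
      show ?thesis unfolding hh_def[of r H P x] c gg.simps m ys xu using s1 by (simp add: hh_def)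
    qed
  qed
qed


lemma main:
  "\<sigma> \<in> K \<Longrightarrow> (\<forall>x\<in>geom_simplex \<sigma>. h x \<in> \<Psi> (min_vertex r \<sigma>)) \<and>
     continuous_map (top_of_set (geom_simplex \<sigma>)) Y h"
proof (induction "card \<sigma>" arbitrary: \<sigma> rule: less_induct)
  case less
  note sb = simplex_basic[OF less.prems]
  define u where "u = min_vertex r \<sigma>"
  have u\<sigma>: "u \<in> \<sigma>" and ule: "\<forall>w\<in>\<sigma>. (u,w)\<in>r"
    using mv[OF less.prems subset_refl sb(2)] by (auto simp: u_def)
  have uV: "u \<in> vertices K" using u\<sigma> sb(3) by blast
  define \<delta> where "\<delta> = (\<lambda>w. if w = u then 1 else (0::real))"
  have h\<delta>: "h \<delta> = P u" unfolding \<delta>_def by (rule h_delta[OF uV])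
  show ?case
  proof (cases "\<sigma> = {u}")
    case True
    have gs: "geom_simplex \<sigma> = {\<delta>}"
    proof
      show "geom_simplex \<sigma> \<subseteq> {\<delta>}"
      proof
        fix x assume x: "x \<in> geom_simplex \<sigma>"
        then have "x u = 1" using True by (simp add: geom_simplex_def)
        then show "x \<in> {\<delta>}" using delta_eq[OF sb(1) x u\<sigma>] by (simp add: \<delta>_def)
      qed
      show "{\<delta>} \<subseteq> geom_simplex \<sigma>" using True by (auto simp: geom_simplex_def \<delta>_def)
    qed
    show ?thesis
    proof
      show "\<forall>x\<in>geom_simplex \<sigma>. h x \<in> \<Psi> (min_vertex r \<sigma>)"
        using gs h\<delta> PP[OF uV] by (simp add: u_def)
      show "continuous_map (top_of_set (geom_simplex \<sigma>)) Y h"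
        by (rule continuous_map_eq[of _ _ "\<lambda>_. P u"]) (use gs h\<delta> PP[OF uV] in auto)
    qed
  next
    case False
    define \<tau> where "\<tau> = \<sigma> - {u}"
    have \<tau>ne: "\<tau> \<noteq> {}" using False u\<sigma> by (auto simp: \<tau>_def)
    have \<tau>K: "\<tau> \<in> K" using sb(5)[OF \<tau>ne] by (auto simp: \<tau>_def)
    have c\<tau>: "card \<tau> < card \<sigma>" unfolding \<tau>_def by (rule card_Diff1_less[OF sb(1) u\<sigma>])
    note IH = less.hyps[OF c\<tau> \<tau>K]
    define v where "v = min_vertex r \<tau>"
    have v\<tau>: "v \<in> \<tau>" using mv[OF less.prems _ \<tau>ne] by (auto simp: v_def \<tau>_def)
    have vV: "v \<in> vertices K" using v\<tau> sb(3) by (auto simp: \<tau>_def)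
    have "\<Psi> v \<subseteq> \<Phi> u" using PsiPhi[OF uV vV] ule v\<tau> by (auto simp: \<tau>_def)
    then have h\<tau>: "\<forall>z\<in>geom_simplex \<tau>. h z \<in> \<Phi> u" using IH by (auto simp: v_def)
    define q where "q = (\<lambda>p::('v\<Rightarrow>real)\<times>real. \<lambda>w. if w = u then snd p else (1 - snd p) * fst p w)"
    define S where "S = geom_simplex \<tau> \<times> {0..1::real}"
    have qS: "q p \<in> geom_simplex \<sigma>" and hq: "h (q p) = H u (h (fst p), snd p)" if "p \<in> S" for p
      using q_step[OF sb(1) u\<sigma> uV \<tau>_def ule h\<tau>[rule_format, of "fst p"], of "snd p"] that
      by (auto simp: S_def q_def)
    have surj: "q ` S = geom_simplex \<sigma>"
    proof
      show "q ` S \<subseteq> geom_simplex \<sigma>" using qS by auto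
      show "geom_simplex \<sigma> \<subseteq> q ` S"
      proof
        fix x assume x: "x \<in> geom_simplex \<sigma>"
        have xu1: "x u \<le> 1" using coord_le1[OF sb(1) x u\<sigma>] .
        have xu0: "0 \<le> x u" using x by (simp add: geom_simplex_def)
        show "x \<in> q ` S"
        proof (cases "x u = 1")
          case True
          define z where "z = (\<lambda>w. if w = v then 1 else (0::real))"
          have z: "z \<in> geom_simplex \<tau>" using v\<tau> sb(1) by (auto simp: geom_simplex_def z_def \<tau>_def)
          have "x = q (z, 1)" using delta_eq[OF sb(1) x u\<sigma> True] by (auto simp: q_def)
          then show ?thesis using z by (auto simp: S_def)
        next
          case False
          then have lt: "x u < 1" using xu1 by simp
          define z where "z = (\<lambda>w. if w = u then 0 else x w / (1 - x u))"
          have "sum x \<sigma> = x u + sum x \<tau>" using sb(1) u\<sigma> by (simp add: sum.remove \<tau>_def)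
          then have st: "sum x \<tau> = 1 - x u" using x by (simp add: geom_simplex_def)
          have "sum z \<tau> = sum x \<tau> / (1 - x u)" unfolding sum_divide_distrib
            by (intro sum.cong) (auto simp: z_def \<tau>_def)
          then have "sum z \<tau> = 1" using st lt by simp
          then have z: "z \<in> geom_simplex \<tau>" using x lt by (auto simp: geom_simplex_def z_def \<tau>_def)
          have "x = q (z, x u)" using lt by (auto simp: q_def z_def)
          then show ?thesis using z xu0 xu1 by (auto simp: S_def)
        qed
      qed
    qed
    have range: "\<forall>x\<in>geom_simplex \<sigma>. h x \<in> \<Psi> u"
    proof
      fix x assume "x \<in> geom_simplex \<sigma>"
      then obtain p where p: "p \<in> S" "x = q p" using surj by (metis imageE)
      have "(h (fst p), snd p) \<in> topspace (prod_topology (subtopology Y (\<Phi> u)) (top_of_set {0..1::real}))"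
        using p h\<tau> PhiY[OF uV] by (auto simp: S_def)
      then have "H u (h (fst p), snd p) \<in> topspace (subtopology Y (\<Psi> u))"
        using continuous_map_image_subset_topspace[OF Hc[OF uV]] by blast
      then show "h x \<in> \<Psi> u" using hq p by simp
    qed
    have c1: "continuous_on S (\<lambda>p::('v\<Rightarrow>real)\<times>real. fst p w)" for w
      by (rule continuous_on_product_then_coordinatewise[OF continuous_on_fst[OF continuous_on_id]])
    have cq: "continuous_on S q" unfolding q_def
    proof (rule continuous_on_coordinatewise_then_product)
      fix w
      show "continuous_on S (\<lambda>p. if w = u then snd p else (1 - snd p) * fst p w)"
      proof (cases "w = u")
        case True then show ?thesis by (simp add: continuous_on_snd continuous_on_id)
      next
        case False then show ?thesis
          by simp (intro continuous_on_mult continuous_on_diff continuous_on_const continuous_on_snd continuous_on_id c1)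
      qed
    qed
    have comp: "compact S" unfolding S_def
      using geom_simplex_compact simplex_basic(1)[OF \<tau>K] by (intro compact_Times) auto
    have quot: "quotient_map (top_of_set S) (top_of_set (geom_simplex \<sigma>)) q"
    proof (rule continuous_imp_quotient_map)
      show "continuous_map (top_of_set S) (top_of_set (geom_simplex \<sigma>)) q"
        using cq qS by auto
      show "compact_space (top_of_set S)" using comp by (simp add: compact_space_subtopology)
      show "Hausdorff_space (top_of_set (geom_simplex \<sigma>))"
        by (rule Hausdorff_space_subtopology[OF Hausdorff_fun])
      show "q ` topspace (top_of_set S) = topspace (top_of_set (geom_simplex \<sigma>))"
        using surj by simp
    qed
    have cg: "continuous_map (top_of_set S) Y (H u \<circ> (\<lambda>p. (h (fst p), snd p)))"
    proof (rule continuous_map_compose)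
      have ch: "continuous_map (top_of_set (geom_simplex \<tau>)) (subtopology Y (\<Phi> u)) h"
        using IH h\<tau> by (auto simp: continuous_map_in_subtopology)
      show "continuous_map (top_of_set S)
             (prod_topology (subtopology Y (\<Phi> u)) (top_of_set {0..1::real})) (\<lambda>p. (h (fst p), snd p))"
        unfolding S_def prod_topology_subtopology_eu[symmetric]
        by (intro continuous_map_pairedI continuous_map_compose[OF continuous_map_fst ch, unfolded o_def]
              continuous_map_snd)
      show "continuous_map (prod_topology (subtopology Y (\<Phi> u)) (top_of_set {0..1::real})) Y (H u)"
        using Hc[OF uV] continuous_map_into_fulltopology by blast
    qed
    have "continuous_map (top_of_set S) Y (h \<circ> q)"
      by (rule continuous_map_eq[OF cg]) (use hq in auto)
    then have "continuous_map (top_of_set (geom_simplex \<sigma>)) Y h"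
      using continuous_compose_quotient_map[OF quot] by blast
    then show ?thesis using range by (simp add: u_def)
  qed
qed

end

lemma whitehead_open:
  "openin (whitehead_topology K) U \<longleftrightarrow> U \<subseteq> realisation K \<and>
     (\<forall>\<sigma>\<in>K. openin (top_of_set (geom_simplex \<sigma>)) (U \<inter> geom_simplex \<sigma>))"
proof -
  have "istopology (\<lambda>U. U \<subseteq> realisation K \<and>
      (\<forall>\<sigma>\<in>K. openin (top_of_set (geom_simplex \<sigma>)) (U \<inter> geom_simplex \<sigma>)))"
    unfolding istopology_def
  proof (rule conjI; intro allI impI)
    fix S T
    assume S: "S \<subseteq> realisation K \<and> (\<forall>\<sigma>\<in>K. openin (top_of_set (geom_simplex \<sigma>)) (S \<inter> geom_simplex \<sigma>))"
       and T: "T \<subseteq> realisation K \<and> (\<forall>\<sigma>\<in>K. openin (top_of_set (geom_simplex \<sigma>)) (T \<inter> geom_simplex \<sigma>))"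
    have "\<forall>\<sigma>\<in>K. openin (top_of_set (geom_simplex \<sigma>)) (S \<inter> T \<inter> geom_simplex \<sigma>)"
    proof
      fix \<sigma> assume "\<sigma> \<in> K"
      have "openin (top_of_set (geom_simplex \<sigma>)) ((S \<inter> geom_simplex \<sigma>) \<inter> (T \<inter> geom_simplex \<sigma>))"
        by (rule openin_Int) (use S T \<open>\<sigma> \<in> K\<close> in blast)+
      then show "openin (top_of_set (geom_simplex \<sigma>)) (S \<inter> T \<inter> geom_simplex \<sigma>)"
        by (simp add: Int_ac)
    qed
    then show "S \<inter> T \<subseteq> realisation K \<and> (\<forall>\<sigma>\<in>K. openin (top_of_set (geom_simplex \<sigma>)) (S \<inter> T \<inter> geom_simplex \<sigma>))"
      using S by blast
  next
    fix \<K> :: "('a \<Rightarrow> real) set set"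
    assume A: "\<forall>S\<in>\<K>. S \<subseteq> realisation K \<and> (\<forall>\<sigma>\<in>K. openin (top_of_set (geom_simplex \<sigma>)) (S \<inter> geom_simplex \<sigma>))"
    have "\<forall>\<sigma>\<in>K. openin (top_of_set (geom_simplex \<sigma>)) (\<Union>\<K> \<inter> geom_simplex \<sigma>)"
    proof
      fix \<sigma> assume "\<sigma> \<in> K"
      then have "openin (top_of_set (geom_simplex \<sigma>)) (\<Union>S\<in>\<K>. S \<inter> geom_simplex \<sigma>)"
        using A by (intro openin_Union) auto
      moreover have "(\<Union>S\<in>\<K>. S \<inter> geom_simplex \<sigma>) = \<Union>\<K> \<inter> geom_simplex \<sigma>" by blast
      ultimately show "openin (top_of_set (geom_simplex \<sigma>)) (\<Union>\<K> \<inter> geom_simplex \<sigma>)" by simp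
    qed
    then show "\<Union>\<K> \<subseteq> realisation K \<and> (\<forall>\<sigma>\<in>K. openin (top_of_set (geom_simplex \<sigma>)) (\<Union>\<K> \<inter> geom_simplex \<sigma>))"
      using A by blast
  qed
  then show ?thesis unfolding whitehead_topology_def by simp
qed

lemma whitehead_topspace: "topspace (whitehead_topology K) = realisation K"
proof
  show "topspace (whitehead_topology K) \<subseteq> realisation K"
    unfolding topspace_def using whitehead_open by blast
  have "openin (whitehead_topology K) (realisation K)"
    unfolding whitehead_open
  proof (intro conjI ballI subset_refl)
    fix \<sigma> assume "\<sigma> \<in> K"
    then have "realisation K \<inter> geom_simplex \<sigma> = geom_simplex \<sigma>"
      unfolding realisation_def by blast
    then show "openin (top_of_set (geom_simplex \<sigma>)) (realisation K \<inter> geom_simplex \<sigma>)" by simp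
  qed
  then show "realisation K \<subseteq> topspace (whitehead_topology K)"
    using openin_subset by blast
qed

theorem theorem3p1:
  fixes K :: "'v set set" and r :: "('v \<times> 'v) set"
    and Y :: "'b topology" and \<Phi> \<Psi> :: "'v \<Rightarrow> 'b set"
  assumes "abstract_simplicial_complex K"
    and "oriented K r"
    and "\<And>v. v \<in> vertices K \<Longrightarrow> \<Phi> v \<noteq> {} \<and> \<Phi> v \<subseteq> topspace Y"
    and "\<And>v. v \<in> vertices K \<Longrightarrow> \<Psi> v \<noteq> {} \<and> \<Psi> v \<subseteq> topspace Y"
    and "\<And>v. v \<in> vertices K \<Longrightarrow> \<Phi> v \<subseteq> \<Psi> v"
    and "\<And>v. v \<in> vertices K \<Longrightarrow> contractible_in Y (\<Phi> v) (\<Psi> v)"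
    and "\<And>u v. u \<in> vertices K \<Longrightarrow> v \<in> vertices K \<Longrightarrow> (u, v) \<in> r \<Longrightarrow> u \<noteq> v \<Longrightarrow> \<Psi> v \<subseteq> \<Phi> u"
  shows "\<exists>h. continuous_map (whitehead_topology K) Y h \<and>
             (\<forall>\<sigma>\<in>K. h ` geom_simplex \<sigma> \<subseteq> \<Psi> (min_vertex r \<sigma>))"
  proof -
  have "\<forall>v\<in>vertices K. \<exists>H p. p \<in> \<Psi> v \<and>
        continuous_map (prod_topology (subtopology Y (\<Phi> v)) (top_of_set {0..1::real})) (subtopology Y (\<Psi> v)) H \<and>
        (\<forall>y\<in>\<Phi> v. H (y, 0) = y \<and> H (y, 1) = p)"
    using assms(6) unfolding contractible_in_def by blast
  then obtain H P where HP: "\<And>v. v \<in> vertices K \<Longrightarrow> P v \<in> \<Psi> v \<and>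
        continuous_map (prod_topology (subtopology Y (\<Phi> v)) (top_of_set {0..1::real})) (subtopology Y (\<Psi> v)) (H v) \<and>
        (\<forall>y\<in>\<Phi> v. H v (y, 0) = y \<and> H v (y, 1) = P v)"
    by metis
  interpret cplx K r Y \<Phi> \<Psi> H P
  proof
    show "abstract_simplicial_complex K" "oriented K r" by fact+
    show "\<And>v. v \<in> vertices K \<Longrightarrow> \<Phi> v \<noteq> {} \<and> \<Phi> v \<subseteq> topspace Y" by fact
    show "\<And>u v. u \<in> vertices K \<Longrightarrow> v \<in> vertices K \<Longrightarrow> (u, v) \<in> r \<Longrightarrow> u \<noteq> v \<Longrightarrow> \<Psi> v \<subseteq> \<Phi> u" by fact
    show "\<And>u. u \<in> vertices K \<Longrightarrow> continuous_map (prod_topology (subtopology Y (\<Phi> u)) (top_of_set {0..1::real})) (subtopology Y (\<Psi> u)) (H u)"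
      using HP by blast
    show "\<And>u y. u \<in> vertices K \<Longrightarrow> y \<in> \<Phi> u \<Longrightarrow> H u (y,0) = y" using HP by blast
    show "\<And>u y. u \<in> vertices K \<Longrightarrow> y \<in> \<Phi> u \<Longrightarrow> H u (y,1) = P u" using HP by blast
    show "\<And>u. u \<in> vertices K \<Longrightarrow> P u \<in> \<Psi> u \<and> P u \<in> topspace Y" using HP assms(4) by blast
  qed
  have rng: "\<forall>\<sigma>\<in>K. h ` geom_simplex \<sigma> \<subseteq> \<Psi> (min_vertex r \<sigma>)"
    using main by blast
  have cont: "continuous_map (whitehead_topology K) Y h"
    unfolding continuous_map_def whitehead_topspace
  proof (intro conjI allI impI)
    show "h \<in> realisation K \<rightarrow> topspace Y"
    proof
      fix x assume "x \<in> realisation K"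
      then obtain \<sigma> where \<sigma>: "\<sigma> \<in> K" "x \<in> geom_simplex \<sigma>" unfolding realisation_def by blast
      have "min_vertex r \<sigma> \<in> vertices K"
        using mv[OF \<sigma>(1) subset_refl simplex_basic(2)[OF \<sigma>(1)]] simplex_basic(3)[OF \<sigma>(1)] by blast
      then show "h x \<in> topspace Y" using rng \<sigma> assms(4) by blast
    qed
    fix U assume U: "openin Y U"
    show "openin (whitehead_topology K) {x \<in> realisation K. h x \<in> U}"
      unfolding whitehead_open
    proof (intro conjI ballI)
      show "{x \<in> realisation K. h x \<in> U} \<subseteq> realisation K" by blast
      fix \<sigma> assume \<sigma>: "\<sigma> \<in> K"
      have "{x \<in> realisation K. h x \<in> U} \<inter> geom_simplex \<sigma> =
            {x \<in> topspace (top_of_set (geom_simplex \<sigma>)). h x \<in> U}"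
        using \<sigma> unfolding realisation_def by auto
      then show "openin (top_of_set (geom_simplex \<sigma>)) ({x \<in> realisation K. h x \<in> U} \<inter> geom_simplex \<sigma>)"
        using openin_continuous_map_preimage[OF conjunct2[OF main[OF \<sigma>]] U] by simp
    qed
  qed
  show ?thesis using cont rng by blast
qed

end
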